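(* Let $X$ be a topological space. The following are equivalent: (1) $X$ is a Baire space; (2) every cliquish function $f\colon X\to\mathbb R$ is pointwise discontinuous. Moreover, if $X$ is perfectly normal, (1) and (2) are equivalent to: (3) every function $f\colon X\to\mathbb R$ with the Lebesgue property is pointwise discontinuous.
   Context: A topological space is Baire if every nonempty open subset of it is nonmeager in it. For $f\colon X\to\mathbb R$: $f$ is cliquish if for every $\varepsilon>0$ and every nonempty open $U\subseteq X$ there is a nonempty open $O\subseteq U$ with $\operatorname{diam} f(O)<\varepsilon$; $f$ is pointwise discontinuous if the set of continuity points of $f$ is dense in $X$; $f$ has the Lebesgue property if for every $\varepsilon>0$ there are closed sets $X_n$ ($n\in\mathbb N$) with $X=\bigcup_n X_n$ and $\operatorname{diam} f(X_n)\le\varepsilon$ for all $n$. *)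

theory Defs
  imports "HOL-Analysis.Analysis"
begin

definition nowhere_dense_in :: "'a topology \<Rightarrow> 'a set \<Rightarrow> bool" where
  "nowhere_dense_in X S \<longleftrightarrow> S \<subseteq> topspace X \<and> X interior_of (X closure_of S) = {}"

definition meager_in :: "'a topology \<Rightarrow> 'a set \<Rightarrow> bool" where
  "meager_in X S \<longleftrightarrow> (\<exists>N :: nat \<Rightarrow> 'a set. (\<forall>n. nowhere_dense_in X (N n)) \<and> S \<subseteq> (\<Union>n. N n))"

definition baire_space :: "'a topology \<Rightarrow> bool" where
  "baire_space X \<longleftrightarrow> (\<forall>U. openin X U \<and> U \<noteq> {} \<longrightarrow> \<not> meager_in X U)"

definition perfectly_normal_space :: "'a topology \<Rightarrow> bool" where
  "perfectly_normal_space X \<longleftrightarrow> normal_space X \<and> (\<forall>C. closedin X C \<longrightarrow> gdelta_in X C)"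

text \<open>diam f(O) < eps, with diam of an unbounded set being infinite\<close>
definition cliquish :: "'a topology \<Rightarrow> ('a \<Rightarrow> real) \<Rightarrow> bool" where
  "cliquish X f \<longleftrightarrow>
     (\<forall>\<epsilon>>0. \<forall>U. openin X U \<and> U \<noteq> {} \<longrightarrow>
        (\<exists>V. openin X V \<and> V \<noteq> {} \<and> V \<subseteq> U \<and> bounded (f ` V) \<and> diameter (f ` V) < \<epsilon>))"

definition pointwise_discontinuous :: "'a topology \<Rightarrow> ('a \<Rightarrow> real) \<Rightarrow> bool" where
  "pointwise_discontinuous X f \<longleftrightarrow>
     X closure_of {x \<in> topspace X. topcontinuous_at X euclideanreal f x} = topspace X"

definition lebesgue_property :: "'a topology \<Rightarrow> ('a \<Rightarrow> real) \<Rightarrow> bool" where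
  "lebesgue_property X f \<longleftrightarrow>
     (\<forall>\<epsilon>>0. \<exists>C :: nat \<Rightarrow> 'a set. (\<forall>n. closedin X (C n)) \<and> topspace X = (\<Union>n. C n) \<and>
        (\<forall>n. bounded (f ` C n) \<and> diameter (f ` C n) \<le> \<epsilon>))"

end

theory Submission
  imports Defs
begin

lemma nd_step:
  assumes "openin X V" "V \<noteq> {}" "nowhere_dense_in X S"
  shows "openin X (V - X closure_of S) \<and> V - X closure_of S \<noteq> {}"
proof
  show "openin X (V - X closure_of S)" using assms(1) by (simp add: openin_diff)
  show "V - X closure_of S \<noteq> {}"
  proof
    assume "V - X closure_of S = {}"
    then have "V \<subseteq> X interior_of (X closure_of S)"
      using assms(1) by (intro interior_of_maximal) auto
    then show False using assms(2,3) by (auto simp: nowhere_dense_in_def)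
  qed
qed

lemma avoid:
  fixes n :: nat
  assumes "\<forall>n. nowhere_dense_in X (N n)" "openin X W" "W \<noteq> {}"
  shows "\<exists>V. openin X V \<and> V \<noteq> {} \<and> V \<subseteq> W \<and> (\<forall>k<n. V \<inter> X closure_of N k = {})"
proof (induction n)
  case 0
  then show ?case using assms by blast
next
  case (Suc n)
  then obtain V where V: "openin X V" "V \<noteq> {}" "V \<subseteq> W" "\<forall>k<n. V \<inter> X closure_of N k = {}"
    by blast
  have "openin X (V - X closure_of N n) \<and> V - X closure_of N n \<noteq> {}"
    using nd_step V(1,2) assms(1) by blast
  then show ?case using V
    by (intro exI[of _ "V - X closure_of N n"]) (auto simp: less_Suc_eq)
qed

definition bump :: "'a topology \<Rightarrow> (nat \<Rightarrow> 'a set) \<Rightarrow> 'a \<Rightarrow> real" where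
  "bump X N x = (if \<exists>n. x \<in> X closure_of N n then (1/2) ^ (LEAST n. x \<in> X closure_of N n) else 0)"

lemma bump_small:
  assumes "\<forall>k<n. x \<notin> X closure_of N k"
  shows "0 \<le> bump X N x \<and> bump X N x \<le> (1/2) ^ n"
proof (cases "\<exists>m. x \<in> X closure_of N m")
  case True
  define m where "m = (LEAST m. x \<in> X closure_of N m)"
  have "x \<in> X closure_of N m" unfolding m_def using True by (rule LeastI_ex)
  then have "n \<le> m" using assms by (meson not_le)
  then have "(1/2::real) ^ m \<le> (1/2) ^ n" by (simp add: power_decreasing)
  then show ?thesis using True by (simp add: bump_def m_def[symmetric])
next
  case False
  then show ?thesis by (simp add: bump_def)
qed

lemma bump_at:
  assumes "x \<in> X closure_of N m" "\<forall>k<m. x \<notin> X closure_of N k"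
  shows "bump X N x = (1/2) ^ m"
proof -
  have "(LEAST n. x \<in> X closure_of N n) = m"
    using assms by (intro Least_equality) (auto simp: not_le[symmetric])
  then show ?thesis using assms by (auto simp: bump_def)
qed

lemma diam_interval2:
  fixes S :: "real set"
  assumes "S \<subseteq> {a..b}" "a \<le> b"
  shows "bounded S \<and> diameter S \<le> b - a"
proof
  show "bounded S" using assms(1) bounded_closed_interval bounded_subset by blast
  show "diameter S \<le> b - a"
  proof (rule diameter_le)
    fix x y assume "x \<in> S" "y \<in> S"
    then have "a \<le> x" "x \<le> b" "a \<le> y" "y \<le> b" using assms by auto
    then show "norm (x - y) \<le> b - a" by (simp add: abs_le_iff)
  qed (use assms in auto)
qed

lemma diam_interval:
  fixes S :: "real set"
  assumes "S \<subseteq> {0..d}" "0 \<le> d"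
  shows "bounded S \<and> diameter S \<le> d"
  using diam_interval2[OF assms] by simp

lemma pow_small: "0 < (e::real) \<Longrightarrow> \<exists>M. (1/2::real) ^ M < e"
  by (rule real_arch_pow_inv) auto

lemma bump_cliquish:
  assumes "\<forall>n. nowhere_dense_in X (N n)"
  shows "cliquish X (bump X N)"
  unfolding cliquish_def
proof (intro allI impI)
  fix e :: real and W
  assume e: "e > 0" and W: "openin X W \<and> W \<noteq> {}"
  obtain M where M: "(1/2::real) ^ M < e" using pow_small e by blast
  obtain V where V: "openin X V" "V \<noteq> {}" "V \<subseteq> W" "\<forall>k<M. V \<inter> X closure_of N k = {}"
    using avoid[OF assms, of W M] W by blast
  have "bump X N ` V \<subseteq> {0..(1/2)^M}"
  proof
    fix z assume "z \<in> bump X N ` V"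
    then obtain y where y: "y \<in> V" "z = bump X N y" by blast
    then have "\<forall>k<M. y \<notin> X closure_of N k" using V(4) by blast
    then have "0 \<le> bump X N y \<and> bump X N y \<le> (1/2)^M" by (rule bump_small)
    then show "z \<in> {0..(1/2)^M}" using y by simp
  qed
  then have "bounded (bump X N ` V) \<and> diameter (bump X N ` V) \<le> (1/2)^M"
    by (intro diam_interval) auto
  then show "\<exists>V. openin X V \<and> V \<noteq> {} \<and> V \<subseteq> W \<and> bounded (bump X N ` V) \<and> diameter (bump X N ` V) < e"
    using V M by (intro exI[of _ V]) auto
qed

lemma bump_disc:
  assumes "\<forall>n. nowhere_dense_in X (N n)" "x \<in> X closure_of N m0"
  shows "\<not> topcontinuous_at X euclideanreal (bump X N) x"
proof
  assume c: "topcontinuous_at X euclideanreal (bump X N) x"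
  define m where "m = (LEAST m. x \<in> X closure_of N m)"
  have xm: "x \<in> X closure_of N m" unfolding m_def using assms(2) by (rule LeastI)
  have lt: "\<forall>k<m. x \<notin> X closure_of N k" unfolding m_def using not_less_Least by blast
  have fx: "bump X N x = (1/2)^m" using bump_at[OF xm lt] .
  have "openin euclideanreal (ball (bump X N x) ((1/2)^(Suc m)))" by simp
  moreover have "bump X N x \<in> ball (bump X N x) ((1/2)^(Suc m))" by simp
  ultimately have "\<exists>U. openin X U \<and> x \<in> U \<and> (\<forall>y\<in>U. bump X N y \<in> ball (bump X N x) ((1/2)^(Suc m)))"
    using c unfolding topcontinuous_at_def by blast
  then obtain U where U: "openin X U" "x \<in> U"
    "\<forall>y\<in>U. bump X N y \<in> ball (bump X N x) ((1/2)^(Suc m))"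
    by blast
  obtain V where V: "openin X V" "V \<noteq> {}" "V \<subseteq> U" "\<forall>k<Suc m. V \<inter> X closure_of N k = {}"
    using avoid[OF assms(1) U(1), of "Suc m"] U(2) by blast
  then obtain y where y: "y \<in> V" by blast
  then have "\<forall>k<Suc m. y \<notin> X closure_of N k" using V(4) by blast
  then have fy: "bump X N y \<le> (1/2)^(Suc m)" by (rule conjunct2[OF bump_small])
  have "dist (bump X N x) (bump X N y) < (1/2)^(Suc m)" using U(3) y V(3) by auto
  then have "\<bar>(1/2)^m - bump X N y\<bar> < (1/2)^(Suc m)" using fx by (simp add: dist_real_def)
  moreover have "(1/2::real)^Suc m = (1/2)^m/2" by simp
  ultimately show False using fy abs_ge_self[of "(1/2)^m - bump X N y"] by linarith
qed

lemma bump_not_pd: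
  assumes "\<forall>n. nowhere_dense_in X (N n)" "openin X U" "U \<noteq> {}" "U \<subseteq> (\<Union>n. N n)"
  shows "\<not> pointwise_discontinuous X (bump X N)"
proof
  let ?S = "{x \<in> topspace X. topcontinuous_at X euclideanreal (bump X N) x}"
  assume pd: "pointwise_discontinuous X (bump X N)"
  have "U \<inter> ?S = {}"
  proof (rule ccontr)
    assume "U \<inter> ?S \<noteq> {}"
    then obtain x where x: "x \<in> U" "topcontinuous_at X euclideanreal (bump X N) x" by blast
    then obtain n where "x \<in> N n" using assms(4) by blast
    moreover have "N n \<subseteq> topspace X" using assms(1) by (simp add: nowhere_dense_in_def)
    ultimately have "x \<in> X closure_of N n" using closure_of_subset by blast
    then show False using bump_disc[OF assms(1)] x(2) by blast
  qed
  then have "U \<inter> X closure_of ?S = {}" using openin_Int_closure_of_eq_empty[OF assms(2)] by blast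
  then have "U \<inter> topspace X = {}" using pd by (simp add: pointwise_discontinuous_def)
  then show False using assms(2,3) openin_subset by blast
qed

lemma not_baire:
  assumes "\<not> baire_space X"
  shows "\<exists>(N :: nat \<Rightarrow> 'a set) U. (\<forall>n. nowhere_dense_in X (N n)) \<and> openin X U \<and> U \<noteq> {} \<and> U \<subseteq> (\<Union>n. N n)"
proof -
  obtain U where U: "openin X U" "U \<noteq> {}" "meager_in X U"
    using assms unfolding baire_space_def by blast
  from U(3)[unfolded meager_in_def] obtain N :: "nat \<Rightarrow> 'a set" where
    N: "(\<forall>n. nowhere_dense_in X (N n)) \<and> U \<subseteq> (\<Union>n. N n)" ..
  show ?thesis by (intro exI[of _ N] exI[of _ U]) (use N U in simp)
qed

lemma baire_cliquish_pd:
  fixes f :: "'a \<Rightarrow> real"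
  assumes B: "baire_space X" and cq: "cliquish X f"
  shows "pointwise_discontinuous X f"
proof -
  let ?S = "{x \<in> topspace X. topcontinuous_at X euclideanreal f x}"
  define G where "G n = \<Union>{V. openin X V \<and> bounded (f`V) \<and> diameter (f`V) < 1 / real (Suc n)}" for n
  define NN where "NN n = topspace X - G n" for n
  have Gopen: "openin X (G n)" for n unfolding G_def by (rule openin_Union) auto
  have nd: "nowhere_dense_in X (NN n)" for n
  proof -
    have cl: "closedin X (NN n)" unfolding NN_def using Gopen by (simp add: closedin_diff)
    have "X interior_of NN n = {}"
    proof (rule ccontr)
      assume ne: "X interior_of NN n \<noteq> {}"
      have pos: "1 / real (Suc n) > 0" by simp
      have ne': "openin X (X interior_of NN n) \<and> X interior_of NN n \<noteq> {}"
        using ne by simp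
      from cq[unfolded cliquish_def, rule_format, OF pos ne'] obtain V where
        V0: "openin X V \<and> V \<noteq> {} \<and> V \<subseteq> X interior_of NN n \<and>
          bounded (f`V) \<and> diameter (f`V) < 1 / real (Suc n)" ..
      have V: "openin X V" "V \<noteq> {}" "V \<subseteq> X interior_of NN n"
          "bounded (f`V)" "diameter (f`V) < 1 / real (Suc n)" using V0 by auto
      have "V \<subseteq> G n" unfolding G_def by (rule Union_upper) (use V in simp)
      moreover have "V \<subseteq> NN n" using V(3) interior_of_subset by (rule order_trans)
      ultimately show False using V(2) unfolding NN_def by auto
    qed
    then show ?thesis using cl
      by (simp add: nowhere_dense_in_def closure_of_closedin closedin_subset)
  qed
  have cont: "topcontinuous_at X euclideanreal f x" if x: "x \<in> topspace X" "\<forall>n. x \<in> G n" for x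
    unfolding topcontinuous_at_def
  proof (intro conjI allI impI)
    show "x \<in> topspace X" by (rule x(1))
    show "f \<in> topspace X \<rightarrow> topspace euclideanreal" by simp
    fix V :: "real set" assume "openin euclideanreal V \<and> f x \<in> V"
    then have "open V" "f x \<in> V" by auto
    then obtain e where e: "e > 0" "ball (f x) e \<subseteq> V" using open_contains_ball by blast
    obtain n where n: "inverse (real (Suc n)) < e" using reals_Archimedean[OF e(1)] by blast
    from x(2) have "x \<in> G n" by blast
    then obtain W where W: "openin X W" "bounded (f`W)" "diameter (f`W) < 1 / real (Suc n)" "x \<in> W"
      unfolding G_def by blast
    have "\<forall>y\<in>W. f y \<in> V"
    proof
      fix y assume "y \<in> W"
      then have "dist (f x) (f y) \<le> diameter (f`W)"
        using W by (intro diameter_bounded_bound) auto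
      then have "dist (f x) (f y) < e" using W(3) n by (simp add: inverse_eq_divide)
      then show "f y \<in> V" using e(2) by auto
    qed
    then show "\<exists>U. openin X U \<and> x \<in> U \<and> (\<forall>y\<in>U. f y \<in> V)" using W by blast
  qed
  have "topspace X \<subseteq> X closure_of ?S"
  proof
    fix p assume p: "p \<in> topspace X"
    show "p \<in> X closure_of ?S"
    proof (rule ccontr)
      assume "p \<notin> X closure_of ?S"
      then obtain T where T: "p \<in> T" "openin X T" "\<forall>y. y \<in> ?S \<longrightarrow> y \<notin> T"
        using p unfolding in_closure_of by blast
      have "T \<subseteq> (\<Union>n. NN n)"
      proof
        fix x assume xT: "x \<in> T"
        then have xt: "x \<in> topspace X" using T(2) openin_subset by blast
        then have "\<not> topcontinuous_at X euclideanreal f x" using T(3) xT by blast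
        then obtain n where "x \<notin> G n" using cont xt by blast
        then show "x \<in> (\<Union>n. NN n)" using xt unfolding NN_def by blast
      qed
      then have "meager_in X T" unfolding meager_in_def using nd by (intro exI[of _ NN]) simp
      then show False using B T unfolding baire_space_def by blast
    qed
  qed
  then show ?thesis unfolding pointwise_discontinuous_def
    by (intro subset_antisym closure_of_subset_topspace)
qed

lemma baire_leb_cliquish:
  fixes f :: "'a \<Rightarrow> real"
  assumes B: "baire_space X" and L: "lebesgue_property X f"
  shows "cliquish X f"
  unfolding cliquish_def
proof (intro allI impI)
  fix e :: real and W
  assume e: "e > 0" and W0: "openin X W \<and> W \<noteq> {}"
  have Wo: "openin X W" and Wne: "W \<noteq> {}" using W0 by auto
  have e2: "e/2 > 0" using e by simp
  from L[unfolded lebesgue_property_def, rule_format, OF e2] obtain C :: "nat \<Rightarrow> 'a set" where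
    C0: "(\<forall>n. closedin X (C n)) \<and> topspace X = (\<Union>n. C n) \<and>
      (\<forall>n. bounded (f ` C n) \<and> diameter (f ` C n) \<le> e/2)" ..
  note C1 = C0[THEN conjunct1]
  note C2 = C0[THEN conjunct2, THEN conjunct1]
  note C3 = C0[THEN conjunct2, THEN conjunct2]
  have Wt: "W \<subseteq> topspace X" using Wo by (rule openin_subset)
  then have "W \<subseteq> (\<Union>n. C n)" using C2 by simp
  then have Wcov: "W \<subseteq> (\<Union>n. W \<inter> C n)" by auto
  have "\<not> (\<forall>n. nowhere_dense_in X (W \<inter> C n))"
  proof
    assume "\<forall>n. nowhere_dense_in X (W \<inter> C n)"
    then have "meager_in X W" unfolding meager_in_def
      by (intro exI[of _ "\<lambda>n. W \<inter> C n"]) (use Wcov in simp)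
    then show False using B Wo Wne unfolding baire_space_def by auto
  qed
  then obtain n where n: "\<not> nowhere_dense_in X (W \<inter> C n)" by auto
  have "W \<inter> C n \<subseteq> topspace X" using Wt by auto
  then have ne: "X interior_of (X closure_of (W \<inter> C n)) \<noteq> {}"
    using n unfolding nowhere_dense_in_def by auto
  let ?I = "X interior_of (X closure_of (W \<inter> C n))"
  have Cn: "closedin X (C n)" using C1 by simp
  have "X closure_of (W \<inter> C n) \<subseteq> C n"
    using closure_of_minimal[OF Int_lower2 Cn] .
  then have Isub: "?I \<subseteq> C n" using interior_of_subset by (rule order_trans[rotated])
  obtain z where z: "z \<in> ?I" using ne by auto
  have "?I \<subseteq> X closure_of (W \<inter> C n)" by (rule interior_of_subset)
  also have "\<dots> \<subseteq> X closure_of W" by (rule closure_of_mono) auto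
  finally have zW: "z \<in> X closure_of W" using z by auto
  have Io: "openin X ?I" by (rule openin_interior_of)
  from zW[unfolded in_closure_of] z Io obtain y where y: "y \<in> W" "y \<in> ?I" by auto
  define V where "V = W \<inter> ?I"
  have Vo: "openin X V" unfolding V_def using Wo Io by (rule openin_Int)
  have sub: "f ` V \<subseteq> f ` C n" using Isub unfolding V_def by auto
  have bC: "bounded (f ` C n)" "diameter (f ` C n) \<le> e/2" using C3 by auto
  have "diameter (f ` V) \<le> diameter (f ` C n)" using sub bC(1) by (rule diameter_subset)
  moreover have "bounded (f ` V)" using bC(1) sub by (rule bounded_subset)
  ultimately have "bounded (f ` V) \<and> diameter (f ` V) < e" using bC(2) e by linarith
  moreover have "V \<noteq> {}" "V \<subseteq> W" using y unfolding V_def by auto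
  ultimately show "\<exists>V. openin X V \<and> V \<noteq> {} \<and> V \<subseteq> W \<and> bounded (f ` V) \<and> diameter (f ` V) < e"
    using Vo by auto
qed

lemma bump_lebesgue:
  fixes X :: "'a topology"
  assumes pn: "perfectly_normal_space X" and nd: "\<forall>n. nowhere_dense_in X (N n)"
  shows "lebesgue_property X (bump X N)"
  unfolding lebesgue_property_def
proof (intro allI impI)
  fix e :: real assume e: "e > 0"
  obtain M where M: "(1/2::real) ^ M < e" using pow_small e by blast
  define A where "A k = (\<Union>j<k. X closure_of N j)" for k
  have Acl: "closedin X (A k)" for k
    unfolding A_def by (rule closedin_Union) auto
  have "\<forall>k. \<exists>Fk :: nat \<Rightarrow> 'a set. (\<forall>j. closedin X (Fk j)) \<and> \<Union>(range Fk) = topspace X - A k"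
  proof
    fix k
    have "gdelta_in X (A k)" using pn Acl unfolding perfectly_normal_space_def by blast
    then have "fsigma_in X (topspace X - A k)" by (simp add: gdelta_in_fsigma_in)
    then show "\<exists>Fk :: nat \<Rightarrow> 'a set. (\<forall>j. closedin X (Fk j)) \<and> \<Union>(range Fk) = topspace X - A k"
      unfolding fsigma_in_ascending by blast
  qed
  from choice[OF this] obtain F :: "nat \<Rightarrow> nat \<Rightarrow> 'a set" where F0: "\<forall>k. (\<forall>j. closedin X (F k j)) \<and> \<Union>(range (F k)) = topspace X - A k"
    by blast
  have F1: "closedin X (F k j)" for k j
    using F0 by blast
  have F2: "\<Union>(range (F k)) = topspace X - A k" for k
    using F0 by blast
  have Fin: "x \<in> topspace X - A k" if "x \<in> F k j" for x k j
  proof -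
    have "x \<in> \<Union>(range (F k))" using that by auto
    then show ?thesis using F2[of k] by simp
  qed
  have Fex: "\<exists>j. x \<in> F k j" if "x \<in> topspace X - A k" for x k
  proof -
    have "x \<in> \<Union>(range (F k))" using that F2[of k] by simp
    then show ?thesis by auto
  qed
  define G where "G i = (if i mod Suc M < M then X closure_of N (i mod Suc M) \<inter> F (i mod Suc M) (i div Suc M)
     else F M (i div Suc M))" for i
  have Gcl: "closedin X (G i)" for i
    unfolding G_def using F1 by (auto intro: closedin_Int)
  have cover: "topspace X = (\<Union>i. G i)"
  proof
    show "(\<Union>i. G i) \<subseteq> topspace X" using Gcl closedin_subset by blast
    show "topspace X \<subseteq> (\<Union>i. G i)"
    proof
      fix x assume x: "x \<in> topspace X"
      show "x \<in> (\<Union>i. G i)"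
      proof (cases "\<exists>m<M. x \<in> X closure_of N m")
        case True
        then obtain m0 where m0: "m0 < M" "x \<in> X closure_of N m0" by blast
        define m where "m = (LEAST m. x \<in> X closure_of N m)"
        have xm: "x \<in> X closure_of N m" unfolding m_def using m0(2) by (rule LeastI)
        have lt: "\<forall>k<m. x \<notin> X closure_of N k" unfolding m_def using not_less_Least by blast
        have "m \<le> m0" unfolding m_def using m0(2) by (rule Least_le)
        then have mM: "m < M" using m0 by simp
        have "x \<in> topspace X - A m" using x lt unfolding A_def by blast
        then obtain j where j: "x \<in> F m j" using Fex by blast
        have md: "(m + Suc M * j) mod Suc M = m"
          by (simp only: mod_mult_self2) (use mM in simp)
        have dv: "(m + Suc M * j) div Suc M = j"
          by (simp only: div_mult_self2[OF nat.simps(3)]) (use mM in simp)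
        have "G (m + Suc M * j) = X closure_of N m \<inter> F m j" unfolding G_def md dv using mM by simp
        then have "x \<in> G (m + Suc M * j)" using xm j by simp
        then show ?thesis by blast
      next
        case False
        then have "x \<in> topspace X - A M" using x unfolding A_def by blast
        then obtain j where j: "x \<in> F M j" using Fex by blast
        have md: "(M + Suc M * j) mod Suc M = M"
          by (simp only: mod_mult_self2) simp
        have dv: "(M + Suc M * j) div Suc M = j"
          by (simp only: div_mult_self2[OF nat.simps(3)]) simp
        have "G (M + Suc M * j) = F M j" unfolding G_def md dv by simp
        then have "x \<in> G (M + Suc M * j)" using j by simp
        then show ?thesis by blast
      qed
    qed
  qed
  have bd: "bounded (bump X N ` G i) \<and> diameter (bump X N ` G i) \<le> e" for i
  proof (cases "i mod Suc M < M")
    case True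
    let ?k = "i mod Suc M"
    have "bump X N ` G i \<subseteq> {(1/2)^?k..(1/2)^?k}"
    proof
      fix z assume "z \<in> bump X N ` G i"
      then obtain y where y: "y \<in> G i" "z = bump X N y" by blast
      have Gi: "G i = X closure_of N ?k \<inter> F ?k (i div Suc M)" unfolding G_def using True by simp
      have y1: "y \<in> X closure_of N ?k" "y \<in> F ?k (i div Suc M)" using y(1) unfolding Gi by auto
      then have "y \<in> topspace X - A ?k" using Fin by blast
      then have "\<forall>k<?k. y \<notin> X closure_of N k" unfolding A_def by blast
      then have "bump X N y = (1/2)^?k" using bump_at[of y X N "i mod Suc M"] y1(1) by blast
      then show "z \<in> {(1/2)^?k..(1/2)^?k}" using y by simp
    qed
    then have "bounded (bump X N ` G i) \<and> diameter (bump X N ` G i) \<le> (1/2)^?k - (1/2)^?k"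
      by (intro diam_interval2) auto
    then show ?thesis using e by auto
  next
    case False
    have "bump X N ` G i \<subseteq> {0..(1/2)^M}"
    proof
      fix z assume "z \<in> bump X N ` G i"
      then obtain y where y: "y \<in> G i" "z = bump X N y" by blast
      have Gi: "G i = F M (i div Suc M)" unfolding G_def using False by simp
      have "y \<in> F M (i div Suc M)" using y(1) unfolding Gi .
      then have "y \<in> topspace X - A M" using Fin by blast
      then have "\<forall>k<M. y \<notin> X closure_of N k" unfolding A_def by blast
      then have "0 \<le> bump X N y \<and> bump X N y \<le> (1/2)^M" by (rule bump_small)
      then show "z \<in> {0..(1/2)^M}" using y by simp
    qed
    then have "bounded (bump X N ` G i) \<and> diameter (bump X N ` G i) \<le> (1/2)^M"
      by (intro diam_interval) auto
    then show ?thesis using M by auto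
  qed
  show "\<exists>C :: nat \<Rightarrow> 'a set. (\<forall>n. closedin X (C n)) \<and> topspace X = (\<Union>n. C n) \<and>
        (\<forall>n. bounded (bump X N ` C n) \<and> diameter (bump X N ` C n) \<le> e)"
    by (intro exI[of _ G]) (use Gcl cover bd in auto)
qed

theorem proposition2p8:
  fixes X :: "'a topology"
  shows "(baire_space X \<longleftrightarrow> (\<forall>f :: 'a \<Rightarrow> real. cliquish X f \<longrightarrow> pointwise_discontinuous X f))
       \<and> (perfectly_normal_space X \<longrightarrow>
           (baire_space X \<longleftrightarrow> (\<forall>f :: 'a \<Rightarrow> real. lebesgue_property X f \<longrightarrow> pointwise_discontinuous X f)))"
proof (intro conjI impI iffI allI)
  show "pointwise_discontinuous X f" if "baire_space X" "cliquish X f" for f :: "'a \<Rightarrow> real"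
    by (rule baire_cliquish_pd[OF that])
  show "pointwise_discontinuous X f" if "baire_space X" "lebesgue_property X f" for f :: "'a \<Rightarrow> real"
    by (rule baire_cliquish_pd[OF that(1) baire_leb_cliquish[OF that]])
  show "baire_space X" if H: "\<forall>f :: 'a \<Rightarrow> real. cliquish X f \<longrightarrow> pointwise_discontinuous X f"
  proof (rule ccontr)
    assume "\<not> baire_space X"
    from not_baire[OF this] obtain N :: "nat \<Rightarrow> 'a set" where
      "\<exists>U. (\<forall>n. nowhere_dense_in X (N n)) \<and> openin X U \<and> U \<noteq> {} \<and> U \<subseteq> (\<Union>n. N n)" ..
    then obtain U where NU0:
      "(\<forall>n. nowhere_dense_in X (N n)) \<and> openin X U \<and> U \<noteq> {} \<and> U \<subseteq> (\<Union>n. N n)" ..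
    have NU: "\<forall>n. nowhere_dense_in X (N n)" "openin X U" "U \<noteq> {}" "U \<subseteq> (\<Union>n. N n)"
      using NU0 by simp_all
    have "pointwise_discontinuous X (bump X N)"
      using H bump_cliquish[OF NU(1)] by simp
    then show False using bump_not_pd[OF NU] by simp
  qed
  show "baire_space X" if pn: "perfectly_normal_space X"
    and H: "\<forall>f :: 'a \<Rightarrow> real. lebesgue_property X f \<longrightarrow> pointwise_discontinuous X f"
  proof (rule ccontr)
    assume "\<not> baire_space X"
    from not_baire[OF this] obtain N :: "nat \<Rightarrow> 'a set" where
      "\<exists>U. (\<forall>n. nowhere_dense_in X (N n)) \<and> openin X U \<and> U \<noteq> {} \<and> U \<subseteq> (\<Union>n. N n)" ..
    then obtain U where NU0:
      "(\<forall>n. nowhere_dense_in X (N n)) \<and> openin X U \<and> U \<noteq> {} \<and> U \<subseteq> (\<Union>n. N n)" ..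
    have NU: "\<forall>n. nowhere_dense_in X (N n)" "openin X U" "U \<noteq> {}" "U \<subseteq> (\<Union>n. N n)"
      using NU0 by simp_all
    have "pointwise_discontinuous X (bump X N)"
      using H bump_lebesgue[OF pn NU(1)] by simp
    then show False using bump_not_pd[OF NU] by simp
  qed
qed

end
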